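(* Let $d\ge2$ and $x,y,u,v\in\mathbb{R}^d_{>0}$. Then there exist $x',y',u',v'\in\mathbb{R}^2_{>0}$ such that \[ s^\pm(x',y')=s^\pm(x,y),\qquad s^\pm(u',v')=s^\pm(u,v),\qquad F_2(x',y';u',v')\ge F_d(x,y;u,v). \]
   Context: For $x,y\in\mathbb{R}^d_{>0}$ define $s^+(x,y)=\max_i \frac{y_i}{x_i}$ and $s^-(x,y)=\min_i\frac{y_i}{x_i}$. Define $F_d:(\mathbb{R}^d_{>0})^4\to\mathbb{R}_{>0}$ by $F_d(x,y;u,v)=\frac{(x\cdot u)(y\cdot v)}{(x\cdot v)(y\cdot u)}$, where $\cdot$ is the standard Euclidean dot product; $F_2$ is the case $d=2$. *)

theory Defs
  imports "HOL-Analysis.Analysis"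
begin

definition pos_vec :: "real ^ 'n \<Rightarrow> bool" where
  "pos_vec x \<longleftrightarrow> (\<forall>i. x $ i > 0)"

definition s_plus :: "real ^ 'n \<Rightarrow> real ^ 'n \<Rightarrow> real" where
  "s_plus x y = Max (range (\<lambda>i. y $ i / x $ i))"

definition s_minus :: "real ^ 'n \<Rightarrow> real ^ 'n \<Rightarrow> real" where
  "s_minus x y = Min (range (\<lambda>i. y $ i / x $ i))"

definition F_cr :: "real ^ 'n \<Rightarrow> real ^ 'n \<Rightarrow> real ^ 'n \<Rightarrow> real ^ 'n \<Rightarrow> real" where
  "F_cr x y u v = ((x \<bullet> u) * (y \<bullet> v)) / ((x \<bullet> v) * (y \<bullet> u))"

end

theory Submission
  imports Defs
begin

definition G :: "real \<Rightarrow> real \<Rightarrow> real \<Rightarrow> real \<Rightarrow> real \<Rightarrow> real" where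
  "G m M m' M' p = (p*m*m' + (1-p)*M*M') / ((p*m+(1-p)*M)*(p*m'+(1-p)*M'))"

lemma G_eq:
  assumes "p*m+(1-p)*M > 0" "p*m'+(1-p)*M' > 0"
  shows "G m M m' M' p = 1 + p*(1-p)*((M-m)*(M'-m')) / ((p*m+(1-p)*M)*(p*m'+(1-p)*M'))"
proof -
  define a where "a = p*m+(1-p)*M"
  define b where "b = p*m'+(1-p)*M'"
  have e: "(p*m*m' + (1-p)*M*M') = a*b + p*(1-p)*((M-m)*(M'-m'))"
    unfolding a_def b_def by (simp add: algebra_simps)
  have "a>0" "b>0" using assms a_def b_def by simp_all
  then show ?thesis unfolding G_def a_def[symmetric] b_def[symmetric] e
    by (simp add: add_divide_distrib)
qed

lemma G_ge1:
  assumes "0<m" "m\<le>M" "0<m'" "m'\<le>M'" "0\<le>p" "p\<le>1"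
  shows "1 \<le> G m M m' M' p"
proof -
  have a: "p*m+(1-p)*M > 0" using assms
    by (smt (verit) mult_nonneg_nonneg mult_pos_pos)
  have b: "p*m'+(1-p)*M' > 0" using assms
    by (smt (verit) mult_nonneg_nonneg mult_pos_pos)
  have "p*(1-p)*((M-m)*(M'-m')) \<ge> 0" using assms by simp
  then show ?thesis using G_eq[OF a b] a b by simp
qed

lemma G_sym: "G m M m' M' p = G m' M' m M p"
  unfolding G_def by (simp add: algebra_simps)

lemma half:
  assumes "0<m" "m<M" "0<m'" "m'<M'" "m<A" "A<M" "m'<B" "B<M'"
    and N: "N \<le> M*B + m'*A - M*m'"
    and PQ: "(M-A)*(M'-m') \<le> (M'-B)*(M-m)"
  shows "\<exists>p. 0<p \<and> p<1 \<and> N/(A*B) \<le> G m M m' M' p"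
proof -
  define p where "p = (M-A)/(M-m)"
  have pM: "p*(M-m) = M-A" using assms unfolding p_def by simp
  have p0: "0<p" "p<1" using assms unfolding p_def by (auto simp: field_simps)
  have Ap: "p*m+(1-p)*M = A" using pM by (simp add: algebra_simps)
  define Bp where "Bp = p*m'+(1-p)*M'"
  have "(M-A)*(M'-m') = (p*(M-m))*(M'-m')" using pM by simp
  also have "\<dots> = p*(M'-m')*(M-m)" by simp
  finally have "(M-A)*(M'-m') = p*(M'-m')*(M-m)" .
  with PQ have "p*(M'-m') \<le> M'-B" using assms by simp
  hence BBp: "B \<le> Bp" unfolding Bp_def by (simp add: algebra_simps)
  have A0: "A>0" "B>0" using assms by linarith+
  have Bp0: "Bp > 0" using BBp A0 by linarith
  have Gp: "G m M m' M' p = 1 + p*(1-p)*((M-m)*(M'-m')) / (A*Bp)"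
    using G_eq[of p m M m' M'] Ap Bp0 A0 unfolding Bp_def by simp
  have "N - A*B \<le> (M-A)*(B-m')" using N by (simp add: algebra_simps)
  hence "N/(A*B) \<le> 1 + (M-A)*(B-m')/(A*B)" using A0 by (simp add: field_simps)
  also have "(M-A)*(B-m')/(A*B) = p*(M-m)*((B-m')/B) / A" using pM A0 by simp
  also have "\<dots> \<le> p*(M-m)*((Bp-m')/Bp) / A"
  proof -
    have "(B-m')/B \<le> (Bp-m')/Bp" using A0 Bp0 BBp assms
      by (simp add: field_simps mult_left_mono)
    then show ?thesis using p0 assms A0 by (intro divide_right_mono mult_left_mono) auto
  qed
  also have "Bp - m' = (1-p)*(M'-m')" unfolding Bp_def by (simp add: algebra_simps)
  also have "p*(M-m)*((1-p)*(M'-m')/Bp) / A = p*(1-p)*((M-m)*(M'-m')) / (A*Bp)"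
    by (simp add: field_simps)
  finally show ?thesis using p0 Gp by auto
qed


lemma core_norm:
  assumes "0<m" "m\<le>M" "0<m'" "m'\<le>M'" "m\<le>A" "A\<le>M" "m'\<le>B" "B\<le>M'"
    and N1: "N \<le> M*B + m'*A - M*m'" and N2: "N \<le> M'*A + m*B - M'*m"
  shows "\<exists>p. 0<p \<and> p<1 \<and> N/(A*B) \<le> G m M m' M' p"
proof (cases "N \<le> A*B")
  case True
  have "A*B>0" using assms by simp
  hence "N/(A*B) \<le> 1" using True by simp
  moreover have "1 \<le> G m M m' M' (1/2)" using assms by (intro G_ge1) auto
  ultimately show ?thesis by (intro exI[of _ "1/2"]) auto
next
  case False
  have "(M-A)*(B-m') > 0" using False N1 by (simp add: algebra_simps)
  moreover have "M-A \<ge> 0" "B-m' \<ge> 0" using assms by auto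
  ultimately have h1: "M-A>0" "B-m'>0"
    by (metis less_eq_real_def mult_zero_left mult_zero_right order_less_irrefl)+
  have "(A-m)*(M'-B) > 0" using False N2 by (simp add: algebra_simps)
  moreover have "A-m \<ge> 0" "M'-B \<ge> 0" using assms by auto
  ultimately have h2: "A-m>0" "M'-B>0"
    by (metis less_eq_real_def mult_zero_left mult_zero_right order_less_irrefl)+
  show ?thesis
  proof (cases "(M-A)*(M'-m') \<le> (M'-B)*(M-m)")
    case True
    show ?thesis using half[OF assms(1) _ assms(3) _ _ _ _ _ N1 True] h1 h2 by auto
  next
    case False
    have "(M'-B)*(M-m) \<le> (M-A)*(M'-m')" using False by simp
    from half[OF assms(3) _ assms(1) _ _ _ _ _ _ this, of N] h1 h2 N2
    show ?thesis by (auto simp: G_sym mult.commute algebra_simps)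
  qed
qed

lemma core:
  assumes "0<m" "m\<le>M" "0<m'" "m'\<le>M'" "W>0"
    and "m*W\<le>Yu" "Yu\<le>M*W" "m'*W\<le>Xv" "Xv\<le>M'*W"
    and N1: "Yv \<le> M*Xv + m'*Yu - M*m'*W" and N2: "Yv \<le> M'*Yu + m*Xv - M'*m*W"
  shows "\<exists>p. 0<p \<and> p<1 \<and> (W*Yv)/(Xv*Yu) \<le> G m M m' M' p"
proof -
  have "\<exists>p. 0<p \<and> p<1 \<and> (Yv/W)/((Yu/W)*(Xv/W)) \<le> G m M m' M' p"
    using assms by (intro core_norm) (auto simp: field_simps)
  moreover have "(Yv/W)/((Yu/W)*(Xv/W)) = (W*Yv)/(Xv*Yu)" using assms(5)
    by (simp add: field_simps)
  ultimately show ?thesis by simp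
qed


lemma s_bounds:
  fixes x y :: "real ^ 'n"
  assumes "pos_vec x" "pos_vec y"
  shows "s_minus x y \<le> y$i/x$i" "y$i/x$i \<le> s_plus x y" "s_minus x y > 0"
    "s_minus x y \<le> s_plus x y"
proof -
  have f: "finite (range (\<lambda>i. y $ i / x $ i))" by simp
  show a: "s_minus x y \<le> y$i/x$i" unfolding s_minus_def by (rule Min_le[OF f]) simp
  show b: "y$i/x$i \<le> s_plus x y" unfolding s_plus_def by (rule Max_ge[OF f]) simp
  have "s_minus x y \<in> range (\<lambda>i. y $ i / x $ i)" unfolding s_minus_def
    by (rule Min_in[OF f]) simp
  then show "s_minus x y > 0" using assms unfolding pos_vec_def by auto
  show "s_minus x y \<le> s_plus x y" using a b by (rule order_trans)
qed

lemma s_bounds2: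
  fixes x y :: "real ^ 'n"
  assumes "pos_vec x" "pos_vec y"
  shows "s_minus x y * x$i \<le> y$i" "y$i \<le> s_plus x y * x$i"
proof -
  have "x$i>0" using assms unfolding pos_vec_def by auto
  then show "s_minus x y * x$i \<le> y$i" "y$i \<le> s_plus x y * x$i"
    using s_bounds(1,2)[OF assms, of i] by (simp_all add: field_simps)
qed

lemma cross_ineq:
  fixes x y u v :: "real ^ 'n"
  assumes "\<And>i. M * x$i - y$i \<ge> 0" "\<And>i. v$i - m' * u$i \<ge> 0"
  shows "y \<bullet> v \<le> M*(x \<bullet> v) + m'*(y \<bullet> u) - M*m'*(x \<bullet> u)"
proof -
  have "0 \<le> (\<Sum>i\<in>UNIV. (M * x$i - y$i)*(v$i - m' * u$i))"
    using assms by (intro sum_nonneg mult_nonneg_nonneg) auto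
  also have "\<dots> = (\<Sum>i\<in>UNIV. M*((x$i)*(v$i)) + m'*((y$i)*(u$i)) - M*m'*((x$i)*(u$i)) - (y$i)*(v$i))"
    by (rule sum.cong) (auto simp: algebra_simps)
  also have "\<dots> = M*(x \<bullet> v) + m'*(y \<bullet> u) - M*m'*(x \<bullet> u) - y \<bullet> v"
    unfolding inner_vec_def by (simp add: sum_subtractf sum.distrib sum_distrib_left)
  finally show ?thesis by simp
qed

lemma scal_ineq:
  fixes x y u :: "real ^ 'n"
  assumes "\<And>i. c * x$i \<le> y$i" "\<And>i. u$i \<ge> 0"
  shows "c * (x \<bullet> u) \<le> y \<bullet> u"
  unfolding inner_vec_def sum_distrib_left
  using assms by (intro sum_mono) (simp add: mult_right_mono mult.assoc[symmetric])

lemma scal_ineq2: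
  fixes x y u :: "real ^ 'n"
  assumes "\<And>i. y$i \<le> c * x$i" "\<And>i. u$i \<ge> 0"
  shows "y \<bullet> u \<le> c * (x \<bullet> u)"
  unfolding inner_vec_def sum_distrib_left
  using assms by (intro sum_mono) (simp add: mult_right_mono mult.assoc[symmetric])

lemma two_d:
  assumes "0<m" "m\<le>M" "0<m'" "m'\<le>M'" "0<p" "p<1"
  defines "x' \<equiv> vector [1,1] :: real^2"
  and "y' \<equiv> vector [m,M] :: real^2"
  and "u' \<equiv> vector [p,1-p] :: real^2"
  and "v' \<equiv> vector [p*m',(1-p)*M'] :: real^2"
  shows "pos_vec x'" "pos_vec y'" "pos_vec u'" "pos_vec v'"
    "s_plus x' y' = M" "s_minus x' y' = m" "s_plus u' v' = M'" "s_minus u' v' = m'"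
    "F_cr x' y' u' v' = G m M m' M' p"
proof -
  have np: "1-p \<noteq> 0" using assms by simp
  have e: "(1 - p) * M' / (1 - p) = M'" using np by simp
  show "pos_vec x'" "pos_vec y'" "pos_vec u'" "pos_vec v'"
    "s_plus x' y' = M" "s_minus x' y' = m" "s_plus u' v' = M'" "s_minus u' v' = m'"
    "F_cr x' y' u' v' = G m M m' M' p"
  using assms e
  by (auto simp: pos_vec_def forall_2 s_plus_def s_minus_def UNIV_2 x'_def y'_def u'_def
      v'_def image_insert F_cr_def G_def inner_vec_def sum_2 max_def min_def algebra_simps)
qed


theorem mainTheorem8:
  fixes x y u v :: "real ^ 'd"
  assumes "CARD('d) \<ge> 2"
    and "pos_vec x" and "pos_vec y" and "pos_vec u" and "pos_vec v"
  shows "\<exists>x' y' u' v' :: real ^ 2.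
           pos_vec x' \<and> pos_vec y' \<and> pos_vec u' \<and> pos_vec v' \<and>
           s_plus x' y' = s_plus x y \<and> s_minus x' y' = s_minus x y \<and>
           s_plus u' v' = s_plus u v \<and> s_minus u' v' = s_minus u v \<and>
           F_cr x' y' u' v' \<ge> F_cr x y u v"
proof -
  define m where "m = s_minus x y"
  define M where "M = s_plus x y"
  define m' where "m' = s_minus u v"
  define M' where "M' = s_plus u v"
  note sxy = s_bounds[OF assms(2,3), folded m_def M_def]
  note suv = s_bounds[OF assms(4,5), folded m'_def M'_def]
  note bxy = s_bounds2[OF assms(2,3), folded m_def M_def]
  note buv = s_bounds2[OF assms(4,5), folded m'_def M'_def]
  have px: "\<And>i. x$i > 0" and py: "\<And>i. y$i > 0" and pu: "\<And>i. u$i > 0" and pv: "\<And>i. v$i > 0"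
    using assms unfolding pos_vec_def by auto
  have W: "x \<bullet> u > 0" unfolding inner_vec_def using px pu
    by (intro sum_pos) (auto intro: mult_pos_pos)
  have i1: "m*(x \<bullet> u) \<le> y \<bullet> u" using bxy pu by (intro scal_ineq) (auto simp: less_imp_le)
  have i2: "y \<bullet> u \<le> M*(x \<bullet> u)" using bxy pu by (intro scal_ineq2) (auto simp: less_imp_le)
  have i3: "m'*(x \<bullet> u) \<le> x \<bullet> v"
    using scal_ineq[of m' u v x] buv px by (auto simp: less_imp_le inner_commute)
  have i4: "x \<bullet> v \<le> M'*(x \<bullet> u)"
    using scal_ineq2[of v M' u x] buv px by (auto simp: less_imp_le inner_commute)
  have i5: "y \<bullet> v \<le> M*(x \<bullet> v) + m'*(y \<bullet> u) - M*m'*(x \<bullet> u)"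
    using bxy buv by (intro cross_ineq) (auto simp: algebra_simps)
  have i6: "v \<bullet> y \<le> M'*(u \<bullet> y) + m*(v \<bullet> x) - M'*m*(u \<bullet> x)"
    using bxy buv by (intro cross_ineq) (auto simp: algebra_simps)
  have i6': "y \<bullet> v \<le> M'*(y \<bullet> u) + m*(x \<bullet> v) - M'*m*(x \<bullet> u)"
    using i6 by (simp add: inner_commute)
  obtain p where p: "0<p" "p<1" "((x \<bullet> u)*(y \<bullet> v))/((x \<bullet> v)*(y \<bullet> u)) \<le> G m M m' M' p"
    using core[OF sxy(3) sxy(4) suv(3) suv(4) W i1 i2 i3 i4 i5 i6'] by blast
  note td = two_d[OF sxy(3) sxy(4) suv(3) suv(4) p(1,2)]
  show ?thesis
    apply (rule exI[of _ "vector [1,1]"], rule exI[of _ "vector [m,M]"],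
        rule exI[of _ "vector [p,1-p]"], rule exI[of _ "vector [p*m',(1-p)*M']"])
    using td p(3) unfolding m_def M_def m'_def M'_def F_cr_def[of x] by auto
qed

end
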